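(* Let $R$ be a finite ranked poset with a unique maximum element $\hat 1^R$. Let $\hat R=R\cup\{\hat 1\}$, where $\hat 1$ is a new element greater than every element of $R$ and of rank $|\hat 1^R|+1$, and let $\dot R=\hat R\setminus\{\hat 1^R\}$ with the induced order and ranks. Then $$\mathcal{M}_{\dot R}(z)=\mathcal{M}_{\hat R}(z)-(1-z)\,g^R_{|R|}(z),$$ where $|R|=|\hat 1^R|$ is the rank of $R$.
   Context: A ranked poset is a poset with a rank function $|\cdot|$ such that covering relations increase rank by exactly one and minimal elements have rank $-1$ (in $\hat R,\dot R$ the new element $\hat 1$ is assigned rank $|\hat 1^R|+1$ as stated). The Möbius function $\mu$ is $\mu[p,p]=1$, $\mu[p,q]=-\sum_{p\le s<q}\mu[p,s]$ for $p<q$, $0$ if $p\not\le q$; $\mu_z[p,q]=\mu[p,q]z^{|q|-|p|}$; $\mathcal{M}_P(z)=\sum_{p\le q\in P}\mu_z[p,q]$. The top polynomial of $R$ is $g^R_{|R|}(z)=\sum_{p\le q,\ |p|\le |R|\le|q|}\mu_z[p,q]=\sum_{p\in R}\mu_z[p,\hat 1^R]$. *)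

theory Defs
  imports "HOL-Computational_Algebra.Polynomial"
begin

definition partial_order_on' :: "'a set \<Rightarrow> ('a \<Rightarrow> 'a \<Rightarrow> bool) \<Rightarrow> bool" where
  "partial_order_on' P le \<longleftrightarrow>
     (\<forall>x\<in>P. le x x) \<and>
     (\<forall>x\<in>P. \<forall>y\<in>P. le x y \<and> le y x \<longrightarrow> x = y) \<and>
     (\<forall>x\<in>P. \<forall>y\<in>P. \<forall>w\<in>P. le x y \<and> le y w \<longrightarrow> le x w)"

definition covers :: "'a set \<Rightarrow> ('a \<Rightarrow> 'a \<Rightarrow> bool) \<Rightarrow> 'a \<Rightarrow> 'a \<Rightarrow> bool" where
  "covers P le x y \<longleftrightarrow> x \<in> P \<and> y \<in> P \<and> le x y \<and> x \<noteq> y \<and>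
     \<not> (\<exists>w\<in>P. le x w \<and> le w y \<and> w \<noteq> x \<and> w \<noteq> y)"

definition ranked_poset :: "'a set \<Rightarrow> ('a \<Rightarrow> 'a \<Rightarrow> bool) \<Rightarrow> ('a \<Rightarrow> int) \<Rightarrow> bool" where
  "ranked_poset P le rk \<longleftrightarrow> finite P \<and> partial_order_on' P le \<and>
     (\<forall>x y. covers P le x y \<longrightarrow> rk y = rk x + 1) \<and>
     (\<forall>x\<in>P. (\<forall>y\<in>P. le y x \<longrightarrow> y = x) \<longrightarrow> rk x = -1)"

definition is_mobius :: "'a set \<Rightarrow> ('a \<Rightarrow> 'a \<Rightarrow> bool) \<Rightarrow> ('a \<Rightarrow> 'a \<Rightarrow> int) \<Rightarrow> bool" where
  "is_mobius P le f \<longleftrightarrow>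
     (\<forall>p q. (p \<notin> P \<or> q \<notin> P) \<longrightarrow> f p q = 0) \<and>
     (\<forall>p\<in>P. \<forall>q\<in>P. f p q =
        (if p = q then 1
         else if le p q then - (\<Sum>s\<in>{s\<in>P. le p s \<and> le s q \<and> s \<noteq> q}. f p s)
         else 0))"

definition mobius :: "'a set \<Rightarrow> ('a \<Rightarrow> 'a \<Rightarrow> bool) \<Rightarrow> 'a \<Rightarrow> 'a \<Rightarrow> int" where
  "mobius P le = (THE f. is_mobius P le f)"

definition mobius_z :: "'a set \<Rightarrow> ('a \<Rightarrow> 'a \<Rightarrow> bool) \<Rightarrow> ('a \<Rightarrow> int) \<Rightarrow> 'a \<Rightarrow> 'a \<Rightarrow> int poly" where
  "mobius_z P le rk p q = monom (mobius P le p q) (nat (rk q - rk p))"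

definition mobius_poly :: "'a set \<Rightarrow> ('a \<Rightarrow> 'a \<Rightarrow> bool) \<Rightarrow> ('a \<Rightarrow> int) \<Rightarrow> int poly" where
  "mobius_poly P le rk = (\<Sum>(p,q)\<in>{(p,q)\<in>P \<times> P. le p q}. mobius_z P le rk p q)"

definition g_poly :: "'a set \<Rightarrow> ('a \<Rightarrow> 'a \<Rightarrow> bool) \<Rightarrow> ('a \<Rightarrow> int) \<Rightarrow> int \<Rightarrow> int poly" where
  "g_poly P le rk k = (\<Sum>(p,q)\<in>{(p,q)\<in>P \<times> P. le p q \<and> rk p \<le> k \<and> k \<le> rk q}. mobius_z P le rk p q)"

text \<open>The hat construction: new element None above everything.\<close>
definition hat_le :: "('a \<Rightarrow> 'a \<Rightarrow> bool) \<Rightarrow> 'a option \<Rightarrow> 'a option \<Rightarrow> bool" where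
  "hat_le le x y \<longleftrightarrow> y = None \<or> (\<exists>a b. x = Some a \<and> y = Some b \<and> le a b)"

definition hat_rk :: "('a \<Rightarrow> int) \<Rightarrow> 'a \<Rightarrow> 'a option \<Rightarrow> int" where
  "hat_rk rk t x = (case x of None \<Rightarrow> rk t + 1 | Some a \<Rightarrow> rk a)"

definition hat_set :: "'a set \<Rightarrow> 'a option set" where
  "hat_set P = insert None (Some ` P)"

definition dot_set :: "'a set \<Rightarrow> 'a \<Rightarrow> 'a option set" where
  "dot_set P t = hat_set P - {Some t}"

end

theory Submission imports Defs begin

definition ivl :: "'a set \<Rightarrow> ('a \<Rightarrow> 'a \<Rightarrow> bool) \<Rightarrow> 'a \<Rightarrow> 'a \<Rightarrow> 'a set" where
  "ivl P le p q = {s\<in>P. le p s \<and> le s q}"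

lemma po_refl: "partial_order_on' P le \<Longrightarrow> x \<in> P \<Longrightarrow> le x x"
  unfolding partial_order_on'_def by blast
lemma po_antisym: "partial_order_on' P le \<Longrightarrow> x \<in> P \<Longrightarrow> y \<in> P \<Longrightarrow> le x y \<Longrightarrow> le y x \<Longrightarrow> x = y"
  unfolding partial_order_on'_def by blast
lemma po_trans: "partial_order_on' P le \<Longrightarrow> x \<in> P \<Longrightarrow> y \<in> P \<Longrightarrow> w \<in> P \<Longrightarrow> le x y \<Longrightarrow> le y w \<Longrightarrow> le x w"
  unfolding partial_order_on'_def by blast

lemma ivl_less:
  assumes po: "partial_order_on' P le" and fin: "finite P"
    and "p \<in> P" "q \<in> P" "s \<in> P" "le p s" "le s q" "s \<noteq> q"
  shows "card (ivl P le p s) < card (ivl P le p q)"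
proof (rule psubset_card_mono)
  show "finite (ivl P le p q)" using fin unfolding ivl_def by simp
  have sub: "ivl P le p s \<subseteq> ivl P le p q" using assms po_trans[OF po] unfolding ivl_def by blast
  have "q \<in> ivl P le p q" using assms po_refl[OF po] po_trans[OF po] unfolding ivl_def by blast
  moreover have "q \<notin> ivl P le p s" using assms po_antisym[OF po] unfolding ivl_def by blast
  ultimately show "ivl P le p s \<subset> ivl P le p q" using sub by blast
qed

lemma mob_unique:
  assumes fin: "finite P" and po: "partial_order_on' P le"
    and f: "is_mobius P le f" and g: "is_mobius P le g"
  shows "f = g"
proof -
  have main: "\<forall>q. q \<in> P \<longrightarrow> card (ivl P le p q) = n \<longrightarrow> f p q = g p q" if p: "p \<in> P" for p n
  proof (induction n rule: less_induct)
    case (less n)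
    show ?case
    proof (intro allI impI)
      fix q assume q: "q \<in> P" and c: "card (ivl P le p q) = n"
      have ih: "f p s = g p s" if "s \<in> {s\<in>P. le p s \<and> le s q \<and> s \<noteq> q}" for s
      proof -
        have sP: "s \<in> P" and lt: "card (ivl P le p s) < n" using ivl_less[OF po fin p q, of s] that c by auto
        show ?thesis using less.IH[OF lt] sP by blast
      qed
      have fe: "f p q = (if p = q then 1 else if le p q then - (\<Sum>s\<in>{s\<in>P. le p s \<and> le s q \<and> s \<noteq> q}. f p s) else 0)"
        using f p q unfolding is_mobius_def by blast
      have ge: "g p q = (if p = q then 1 else if le p q then - (\<Sum>s\<in>{s\<in>P. le p s \<and> le s q \<and> s \<noteq> q}. g p s) else 0)"
        using g p q unfolding is_mobius_def by blast
      have S: "(\<Sum>s\<in>{s\<in>P. le p s \<and> le s q \<and> s \<noteq> q}. f p s) = (\<Sum>s\<in>{s\<in>P. le p s \<and> le s q \<and> s \<noteq> q}. g p s)"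
        by (rule sum.cong[OF refl ih])
      show "f p q = g p q" unfolding fe ge S by simp
    qed
  qed
  show ?thesis
  proof (intro ext)
    fix p q
    show "f p q = g p q"
    proof (cases "p \<in> P \<and> q \<in> P")
      case True then show ?thesis using main by blast
    next
      case False then show ?thesis using f g unfolding is_mobius_def by auto
    qed
  qed
qed

fun mfuel :: "'a set \<Rightarrow> ('a \<Rightarrow> 'a \<Rightarrow> bool) \<Rightarrow> nat \<Rightarrow> 'a \<Rightarrow> 'a \<Rightarrow> int" where
  "mfuel P le 0 p q = (if p \<in> P \<and> q \<in> P \<and> p = q then 1 else 0)"
| "mfuel P le (Suc n) p q = (if p \<notin> P \<or> q \<notin> P then 0 else if p = q then 1
     else if le p q then - (\<Sum>s\<in>{s\<in>P. le p s \<and> le s q \<and> s \<noteq> q}. mfuel P le n p s) else 0)"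

lemma mfuel_stable:
  assumes fin: "finite P" and po: "partial_order_on' P le"
  shows "\<forall>p q k. p \<in> P \<longrightarrow> q \<in> P \<longrightarrow> card (ivl P le p q) \<le> Suc n \<longrightarrow> mfuel P le (n + k) p q = mfuel P le n p q"
proof (induction n)
  case 0
  show ?case
  proof (intro allI impI)
    fix p q k assume p: "p \<in> P" and q: "q \<in> P" and c: "card (ivl P le p q) \<le> Suc 0"
    show "mfuel P le (0 + k) p q = mfuel P le 0 p q"
    proof (cases "p = q")
      case True then show ?thesis using p by (cases k) auto
    next
      case False
      have "\<not> le p q"
      proof
        assume "le p q"
        then have "{p, q} \<subseteq> ivl P le p q" using p q po_refl[OF po] unfolding ivl_def by auto
        then have "card {p,q} \<le> card (ivl P le p q)" using fin unfolding ivl_def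
          by (intro card_mono) auto
        then show False using c False by simp
      qed
      then show ?thesis using False by (cases k) auto
    qed
  qed
next
  case (Suc n)
  show ?case
  proof (intro allI impI)
    fix p q k assume p: "p \<in> P" and q: "q \<in> P" and c: "card (ivl P le p q) \<le> Suc (Suc n)"
    have ih: "mfuel P le (n + k) p s = mfuel P le n p s" if "s \<in> {s\<in>P. le p s \<and> le s q \<and> s \<noteq> q}" for s
    proof -
      have sP: "s \<in> P" and lt: "card (ivl P le p s) \<le> Suc n" using ivl_less[OF po fin p q, of s] that c by auto
      show ?thesis using Suc.IH p sP lt by blast
    qed
    have S: "(\<Sum>s\<in>{s\<in>P. le p s \<and> le s q \<and> s \<noteq> q}. mfuel P le (n + k) p s) = (\<Sum>s\<in>{s\<in>P. le p s \<and> le s q \<and> s \<noteq> q}. mfuel P le n p s)"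
        by (rule sum.cong[OF refl ih])
    show "mfuel P le (Suc n + k) p q = mfuel P le (Suc n) p q"
      using S by simp
  qed
qed

lemma mob_exists:
  assumes fin: "finite P" and po: "partial_order_on' P le"
  shows "is_mobius P le (mfuel P le (card P))"
  unfolding is_mobius_def
proof (intro conjI allI impI ballI)
  fix p q assume "p \<notin> P \<or> q \<notin> P"
  then show "mfuel P le (card P) p q = 0" by (cases "card P") auto
next
  fix p q assume p: "p \<in> P" and q: "q \<in> P"
  show "mfuel P le (card P) p q = (if p = q then 1 else if le p q then
     - (\<Sum>s\<in>{s\<in>P. le p s \<and> le s q \<and> s \<noteq> q}. mfuel P le (card P) p s) else 0)"
  proof (cases "card P")
    case 0 then show ?thesis using fin p by simp
  next
    case (Suc m)
    have ih: "mfuel P le (card P) p s = mfuel P le m p s" if "s \<in> {s\<in>P. le p s \<and> le s q \<and> s \<noteq> q}" for s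
    proof -
      have "card (ivl P le p s) < card (ivl P le p q)" using ivl_less[OF po fin p q, of s] that by auto
      moreover have "card (ivl P le p q) \<le> card P" using fin unfolding ivl_def by (intro card_mono) auto
      ultimately have "card (ivl P le p s) \<le> Suc m" using Suc by simp
      then show ?thesis using mfuel_stable[OF fin po, of m] that Suc p
        by (metis (no_types, lifting) add.commute mem_Collect_eq plus_1_eq_Suc)
    qed
    have "mfuel P le (card P) p q = mfuel P le (Suc m) p q" using Suc by simp
    also have "\<dots> = (if p = q then 1 else if le p q then
     - (\<Sum>s\<in>{s\<in>P. le p s \<and> le s q \<and> s \<noteq> q}. mfuel P le m p s) else 0)"
      using p q by (simp only: mfuel.simps) simp
    moreover have S: "(\<Sum>s\<in>{s\<in>P. le p s \<and> le s q \<and> s \<noteq> q}. mfuel P le (card P) p s) = (\<Sum>s\<in>{s\<in>P. le p s \<and> le s q \<and> s \<noteq> q}. mfuel P le m p s)"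
        by (rule sum.cong[OF refl ih])
    ultimately show ?thesis by simp
  qed
qed

lemma mobius_is:
  assumes fin: "finite P" and po: "partial_order_on' P le"
  shows "is_mobius P le (mobius P le)"
proof -
  have "\<exists>!f. is_mobius P le f" using mob_exists[OF fin po] mob_unique[OF fin po] by blast
  then show ?thesis unfolding mobius_def by (rule theI')
qed

lemma mobius_eqI:
  assumes fin: "finite P" and po: "partial_order_on' P le" and "is_mobius P le f"
  shows "mobius P le = f"
  using mob_unique[OF fin po mobius_is[OF fin po] assms(3)] .

lemma mob_sum:
  assumes fin: "finite P" and po: "partial_order_on' P le"
    and p: "p \<in> P" and q: "q \<in> P" and pq: "le p q"
  shows "(\<Sum>s\<in>{s\<in>P. le p s \<and> le s q}. mobius P le p s) = (if p = q then 1 else 0)"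
proof -
  have M: "is_mobius P le (mobius P le)" by (rule mobius_is[OF fin po])
  show ?thesis
  proof (cases "p = q")
    case True
    then have "{s\<in>P. le p s \<and> le s q} = {p}" using p po_refl[OF po] po_antisym[OF po] by auto
    then show ?thesis using M p True unfolding is_mobius_def by simp
  next
    case False
    have e: "{s\<in>P. le p s \<and> le s q} = insert q {s\<in>P. le p s \<and> le s q \<and> s \<noteq> q}"
      using q pq po_refl[OF po] by auto
    have "mobius P le p q = - (\<Sum>s\<in>{s\<in>P. le p s \<and> le s q \<and> s \<noteq> q}. mobius P le p s)"
      using M p q False pq unfolding is_mobius_def by auto
    then show ?thesis unfolding e using fin False by (subst sum.insert) auto
  qed
qed

lemma rank_less:
  assumes rp: "ranked_poset P le rk"
  shows "\<forall>q. p \<in> P \<longrightarrow> q \<in> P \<longrightarrow> le p q \<longrightarrow> p \<noteq> q \<longrightarrow> card (ivl P le p q) = n \<longrightarrow> rk p < rk q"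
proof (induction n arbitrary: p rule: less_induct)
  case (less n)
  have fin: "finite P" and po: "partial_order_on' P le"
    and cov: "\<And>x y. covers P le x y \<Longrightarrow> rk y = rk x + 1" using rp unfolding ranked_poset_def by auto
  show ?case
  proof (intro allI impI)
    fix q assume p: "p \<in> P" and q: "q \<in> P" and pq: "le p q" and ne: "p \<noteq> q" and c: "card (ivl P le p q) = n"
    define W where "W = {w\<in>P. le p w \<and> w \<noteq> p \<and> le w q}"
    have "q \<in> W" using q pq ne po_refl[OF po] unfolding W_def by auto
    then obtain w where w: "w \<in> W" and wmin: "\<And>v. v \<in> W \<Longrightarrow> card (ivl P le p w) \<le> card (ivl P le p v)"
      using ex_has_least_nat[of "\<lambda>w. w \<in> W" q "\<lambda>w. card (ivl P le p w)"] by blast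
    have wP: "w \<in> P" and pw: "le p w" and wp: "w \<noteq> p" and wq: "le w q" using w unfolding W_def by auto
    have "covers P le p w"
      unfolding covers_def
    proof (intro conjI p wP pw)
      show "p \<noteq> w" using wp by simp
      show "\<not> (\<exists>v\<in>P. le p v \<and> le v w \<and> v \<noteq> p \<and> v \<noteq> w)"
      proof
        assume "\<exists>v\<in>P. le p v \<and> le v w \<and> v \<noteq> p \<and> v \<noteq> w"
        then obtain v where v: "v \<in> P" "le p v" "le v w" "v \<noteq> p" "v \<noteq> w" by blast
        have "v \<in> W" using v wq wP q po_trans[OF po] unfolding W_def by blast
        then have "card (ivl P le p w) \<le> card (ivl P le p v)" by (rule wmin)
        moreover have "card (ivl P le p v) < card (ivl P le p w)" using ivl_less[OF po fin p wP v(1) v(2) v(3) v(5)] .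
        ultimately show False by simp
      qed
    qed
    then have rw: "rk w = rk p + 1" by (rule cov)
    show "rk p < rk q"
    proof (cases "w = q")
      case True then show ?thesis using rw by simp
    next
      case False
      have sub: "ivl P le w q \<subseteq> ivl P le p q" using pw wP p po_trans[OF po] unfolding ivl_def by blast
      have "p \<notin> ivl P le w q" using po_antisym[OF po] wP p pw wp unfolding ivl_def by blast
      moreover have "p \<in> ivl P le p q" using p pq po_refl[OF po] unfolding ivl_def by blast
      ultimately have "card (ivl P le w q) < card (ivl P le p q)" using sub fin unfolding ivl_def
        by (intro psubset_card_mono) auto
      then have "rk w < rk q" using less.IH[of "card (ivl P le w q)" w] c wP q wq False by blast
      then show ?thesis using rw by simp
    qed
  qed
qed

lemma rank_lt:
  assumes "ranked_poset P le rk" "p \<in> P" "q \<in> P" "le p q" "p \<noteq> q"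
  shows "rk p < rk q"
  using rank_less[OF assms(1)] assms by blast


lemma po_subset: "partial_order_on' A le \<Longrightarrow> B \<subseteq> A \<Longrightarrow> partial_order_on' B le"
  unfolding partial_order_on'_def by blast

lemma hat_po:
  assumes po: "partial_order_on' P le"
  shows "partial_order_on' (hat_set P) (hat_le le)"
  unfolding partial_order_on'_def
proof (intro conjI ballI impI)
  fix x assume "x \<in> hat_set P" then show "hat_le le x x"
    using po_refl[OF po] by (auto simp: hat_set_def hat_le_def)
next
  fix x y assume "x \<in> hat_set P" "y \<in> hat_set P" "hat_le le x y \<and> hat_le le y x"
  note h = this
  show "x = y"
  proof (cases y)
    case None
    then show ?thesis using h by (cases x) (auto simp: hat_le_def)
  next
    case (Some b)
    obtain a where xa: "x = Some a" and ab: "le a b" using h Some by (auto simp: hat_le_def)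
    have ba: "le b a" using h xa Some by (simp add: hat_le_def)
    have "a \<in> P" "b \<in> P" using h xa Some by (auto simp: hat_set_def)
    then show ?thesis using po_antisym[OF po] ab ba xa Some by blast
  qed
next
  fix x y w assume "x \<in> hat_set P" "y \<in> hat_set P" "w \<in> hat_set P" "hat_le le x y \<and> hat_le le y w"
  note h = this
  show "hat_le le x w"
  proof (cases w)
    case None then show ?thesis by (simp add: hat_le_def)
  next
    case (Some c)
    obtain b where yb: "y = Some b" and bc: "le b c" using h Some by (auto simp: hat_le_def)
    obtain a where xa: "x = Some a" and ab: "le a b" using h yb by (auto simp: hat_le_def)
    have "a \<in> P" "b \<in> P" "c \<in> P" using h xa yb Some by (auto simp: hat_set_def)
    then have "le a c" using po_trans[OF po] ab bc by blast
    then show ?thesis using xa Some by (simp add: hat_le_def)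
  qed
qed

lemma hat_fin: "finite P \<Longrightarrow> finite (hat_set P)"
  unfolding hat_set_def by simp

lemma hat_mobius:
  assumes fin: "finite R" and po: "partial_order_on' R le" and t: "t \<in> R" and top: "\<forall>x\<in>R. le x t"
  shows "mobius (hat_set R) (hat_le le) = (\<lambda>x y. case x of None \<Rightarrow> (if y = None then 1 else 0)
      | Some p \<Rightarrow> (case y of None \<Rightarrow> (if p = t then -1 else 0) | Some q \<Rightarrow> mobius R le p q))"
    (is "_ = ?F")
proof (rule mobius_eqI[OF hat_fin[OF fin] hat_po[OF po]])
  have M: "is_mobius R le (mobius R le)" by (rule mobius_is[OF fin po])
  have m0: "\<And>p q. p \<notin> R \<or> q \<notin> R \<Longrightarrow> mobius R le p q = 0" using M unfolding is_mobius_def by blast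
  have meq: "\<And>p q. p \<in> R \<Longrightarrow> q \<in> R \<Longrightarrow> mobius R le p q = (if p = q then 1
         else if le p q then - (\<Sum>s\<in>{s\<in>R. le p s \<and> le s q \<and> s \<noteq> q}. mobius R le p s) else 0)"
    using M unfolding is_mobius_def by blast
  show "is_mobius (hat_set R) (hat_le le) ?F"
    unfolding is_mobius_def
  proof (intro conjI allI impI ballI)
    fix x y assume "x \<notin> hat_set R \<or> y \<notin> hat_set R"
    then show "?F x y = 0" using t m0 unfolding hat_set_def
      by (cases x; cases y) auto
  next
    fix x y assume x: "x \<in> hat_set R" and y: "y \<in> hat_set R"
    show "?F x y = (if x = y then 1 else if hat_le le x y then
        - (\<Sum>s\<in>{s\<in>hat_set R. hat_le le x s \<and> hat_le le s y \<and> s \<noteq> y}. ?F x s) else 0)"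
    proof (cases x)
      case None then show ?thesis by (cases y) (auto simp: hat_le_def)
    next
      case (Some p)
      have pR: "p \<in> R" using x Some unfolding hat_set_def by auto
      show ?thesis
      proof (cases y)
        case None
        have e: "{s\<in>hat_set R. hat_le le x s \<and> hat_le le s y \<and> s \<noteq> y} = Some ` {s\<in>R. le p s \<and> le s t}"
          using Some None top unfolding hat_set_def hat_le_def by auto
        have "(\<Sum>s\<in>{s\<in>hat_set R. hat_le le x s \<and> hat_le le s y \<and> s \<noteq> y}. ?F x s)
            = (\<Sum>s\<in>{s\<in>R. le p s \<and> le s t}. mobius R le p s)"
          unfolding e by (simp add: sum.reindex Some)
        also have "\<dots> = (if p = t then 1 else 0)" using mob_sum[OF fin po pR t] top pR by simp
        finally show ?thesis using Some None by (simp add: hat_le_def)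
      next
        fix q assume Sq: "y = Some q"
        have qR: "q \<in> R" using y Sq unfolding hat_set_def by auto
        have e: "{s\<in>hat_set R. hat_le le x s \<and> hat_le le s y \<and> s \<noteq> y} = Some ` {s\<in>R. le p s \<and> le s q \<and> s \<noteq> q}"
          using Some Sq unfolding hat_set_def hat_le_def by auto
        have "(\<Sum>s\<in>{s\<in>hat_set R. hat_le le x s \<and> hat_le le s y \<and> s \<noteq> y}. ?F x s)
            = (\<Sum>s\<in>{s\<in>R. le p s \<and> le s q \<and> s \<noteq> q}. mobius R le p s)"
          unfolding e by (simp add: sum.reindex Some)
        then show ?thesis using Some Sq meq[OF pR qR] by (simp add: hat_le_def)
      qed
    qed
  qed
qed

lemma dot_mobius:
  assumes fin: "finite R" and po: "partial_order_on' R le" and t: "t \<in> R" and top: "\<forall>x\<in>R. le x t"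
  shows "mobius (dot_set R t) (hat_le le) = (\<lambda>x y. case x of None \<Rightarrow> (if y = None then 1 else 0)
      | Some p \<Rightarrow> if p = t then 0 else (case y of None \<Rightarrow> (if p \<in> R then mobius R le p t else 0)
           | Some q \<Rightarrow> if q = t then 0 else mobius R le p q))"
    (is "_ = ?F")
proof (rule mobius_eqI)
  show "finite (dot_set R t)" using hat_fin[OF fin] unfolding dot_set_def by simp
  show "partial_order_on' (dot_set R t) (hat_le le)"
    using po_subset[OF hat_po[OF po]] unfolding dot_set_def by blast
  have M: "is_mobius R le (mobius R le)" by (rule mobius_is[OF fin po])
  have m0: "\<And>p q. p \<notin> R \<or> q \<notin> R \<Longrightarrow> mobius R le p q = 0" using M unfolding is_mobius_def by blast
  have meq: "\<And>p q. p \<in> R \<Longrightarrow> q \<in> R \<Longrightarrow> mobius R le p q = (if p = q then 1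
         else if le p q then - (\<Sum>s\<in>{s\<in>R. le p s \<and> le s q \<and> s \<noteq> q}. mobius R le p s) else 0)"
    using M unfolding is_mobius_def by blast
  have topu: "\<And>q. q \<in> R \<Longrightarrow> le t q \<Longrightarrow> q = t" using po_antisym[OF po] t top by blast
  show "is_mobius (dot_set R t) (hat_le le) ?F"
    unfolding is_mobius_def
  proof (intro conjI allI impI ballI)
    fix x y assume "x \<notin> dot_set R t \<or> y \<notin> dot_set R t"
    then show "?F x y = 0" using t m0 unfolding dot_set_def hat_set_def
      by (cases x; cases y) auto
  next
    fix x y assume x: "x \<in> dot_set R t" and y: "y \<in> dot_set R t"
    show "?F x y = (if x = y then 1 else if hat_le le x y then
        - (\<Sum>s\<in>{s\<in>dot_set R t. hat_le le x s \<and> hat_le le s y \<and> s \<noteq> y}. ?F x s) else 0)"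
    proof (cases x)
      case None then show ?thesis by (cases y) (auto simp: hat_le_def)
    next
      case (Some p)
      have pR: "p \<in> R" and pt: "p \<noteq> t" using x Some unfolding dot_set_def hat_set_def by auto
      show ?thesis
      proof (cases y)
        case None
        have e: "{s\<in>dot_set R t. hat_le le x s \<and> hat_le le s y \<and> s \<noteq> y} = Some ` {s\<in>R. le p s \<and> le s t \<and> s \<noteq> t}"
          using Some None top unfolding dot_set_def hat_set_def hat_le_def by auto
        have "(\<Sum>s\<in>{s\<in>dot_set R t. hat_le le x s \<and> hat_le le s y \<and> s \<noteq> y}. ?F x s)
            = (\<Sum>s\<in>{s\<in>R. le p s \<and> le s t \<and> s \<noteq> t}. mobius R le p s)"
          unfolding e using pt by (simp add: sum.reindex Some)
        moreover have "mobius R le p t = - (\<Sum>s\<in>{s\<in>R. le p s \<and> le s t \<and> s \<noteq> t}. mobius R le p s)"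
          using meq[OF pR t] pt top pR by simp
        ultimately show ?thesis using Some None pt pR by (simp add: hat_le_def)
      next
        fix q assume Sq: "y = Some q"
        have qR: "q \<in> R" and qt: "q \<noteq> t" using y Sq unfolding dot_set_def hat_set_def by auto
        have e: "{s\<in>dot_set R t. hat_le le x s \<and> hat_le le s y \<and> s \<noteq> y} = Some ` {s\<in>R. le p s \<and> le s q \<and> s \<noteq> q}"
          using Some Sq topu qR qt unfolding dot_set_def hat_set_def hat_le_def by auto
        have "(\<Sum>s\<in>{s\<in>dot_set R t. hat_le le x s \<and> hat_le le s y \<and> s \<noteq> y}. ?F x s)
            = (\<Sum>s\<in>{s\<in>R. le p s \<and> le s q \<and> s \<noteq> q}. mobius R le p s)"
          unfolding e using pt topu qR qt by (auto simp add: sum.reindex Some intro!: sum.cong)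
        then show ?thesis using Some Sq meq[OF pR qR] pt qt by (simp add: hat_le_def)
      qed
    qed
  qed
qed

lemma pair_sum:
  assumes "finite A"
  shows "(\<Sum>(x,y)\<in>{(x,y)\<in>A\<times>A. L x y}. h x y) = (\<Sum>x\<in>A. \<Sum>y\<in>A. if L x y then h x y else (0::'b::comm_monoid_add))"
proof -
  have "(\<Sum>(x,y)\<in>{(x,y)\<in>A\<times>A. L x y}. h x y) = (\<Sum>(x,y)\<in>A\<times>A. if L x y then h x y else 0)"
    using assms by (intro sum.mono_neutral_cong_left) (auto split: if_splits)
  also have "\<dots> = (\<Sum>x\<in>A. \<Sum>y\<in>A. if L x y then h x y else 0)"
    by (simp add: sum.cartesian_product)
  finally show ?thesis .
qed
lemma m1: "[:1, -1:] = 1 - monom (1::int) 1"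
  by (simp add: monom_altdef one_pCons)
lemma m2: "monom (-1::int) 1 = - monom 1 1"
  by (simp add: monom_altdef one_pCons)
lemma m3: "monom (a::int) (Suc n) = monom 1 1 * monom a n"
  by (simp add: mult_monom)

theorem mainTheorem10:
  fixes R :: "'a set" and le :: "'a \<Rightarrow> 'a \<Rightarrow> bool" and rk :: "'a \<Rightarrow> int" and t :: 'a
  assumes "ranked_poset R le rk"
    and "t \<in> R" and "\<forall>x\<in>R. le x t"
  shows "mobius_poly (dot_set R t) (hat_le le) (hat_rk rk t)
         = mobius_poly (hat_set R) (hat_le le) (hat_rk rk t)
           - [:1, -1:] * g_poly R le rk (rk t)"
proof -
  have fin: "finite R" and po: "partial_order_on' R le" using assms(1) unfolding ranked_poset_def by auto
  have t: "t \<in> R" and top: "\<forall>x\<in>R. le x t" using assms by auto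
  define \<mu> where "\<mu> = mobius R le"
  have M: "is_mobius R le \<mu>" unfolding \<mu>_def by (rule mobius_is[OF fin po])
  have \<mu>tt: "\<mu> t t = 1" using M t unfolding is_mobius_def by simp
  have topu: "\<And>q. q \<in> R \<Longrightarrow> le t q \<Longrightarrow> q = t" using po_antisym[OF po] t top by blast
  have rkle: "\<And>p. p \<in> R \<Longrightarrow> rk p \<le> rk t"
  proof -
    fix p assume p: "p \<in> R"
    show "rk p \<le> rk t"
    proof (cases "p = t")
      case False then show ?thesis using rank_lt[OF assms(1) p t] top p by fastforce
    qed simp
  qed
  have rklt: "\<And>p. p \<in> R \<Longrightarrow> p \<noteq> t \<Longrightarrow> rk p < rk t"
    using rank_lt[OF assms(1) _ t] top by blast
  define B where "B = (\<Sum>p\<in>R-{t}. \<Sum>q\<in>R-{t}. if le p q then monom (\<mu> p q) (nat (rk q - rk p)) else 0)"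
  define G' where "G' = (\<Sum>p\<in>R-{t}. monom (\<mu> p t) (nat (rk t - rk p)))"
  define G where "G = (\<Sum>p\<in>R. monom (\<mu> p t) (nat (rk t - rk p)))"
  have GG: "G = 1 + G'" unfolding G_def G'_def using fin t \<mu>tt
    by (simp add: sum.remove monom_0 one_pCons)
  have hatset: "hat_set R = insert None (Some ` R)" unfolding hat_set_def ..
  have dotset: "dot_set R t = insert None (Some ` (R - {t}))" unfolding dot_set_def hat_set_def by auto
  have finh: "finite (hat_set R)" using fin unfolding hat_set_def by simp
  have find: "finite (dot_set R t)" using fin unfolding dot_set_def hat_set_def by simp
  have hm: "mobius (hat_set R) (hat_le le) (Some p) (Some q) = \<mu> p q"
    "mobius (hat_set R) (hat_le le) (Some p) None = (if p = t then -1 else 0)"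
    "mobius (hat_set R) (hat_le le) None None = 1"
    "mobius (hat_set R) (hat_le le) None (Some q) = 0" for p q
    by (simp_all add: hat_mobius[OF fin po t top] \<mu>_def)
  have dm: "mobius (dot_set R t) (hat_le le) (Some p) (Some q) = (if p = t \<or> q = t then 0 else \<mu> p q)"
    "mobius (dot_set R t) (hat_le le) (Some p) None = (if p = t then 0 else if p \<in> R then \<mu> p t else 0)"
    "mobius (dot_set R t) (hat_le le) None None = 1"
    "mobius (dot_set R t) (hat_le le) None (Some q) = 0" for p q
    by (simp_all add: dot_mobius[OF fin po t top] \<mu>_def)
  have hr: "hat_rk rk t (Some a) = rk a" "hat_rk rk t None = rk t + 1" for a
    by (simp_all add: hat_rk_def)
  have hl: "hat_le le (Some a) (Some b) = le a b" "hat_le le x None" "\<not> hat_le le None (Some b)" for a b x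
    by (simp_all add: hat_le_def)
  have HAT: "mobius_poly (hat_set R) (hat_le le) (hat_rk rk t) = 1
     + (\<Sum>p\<in>R. monom (if p = t then -1 else 0) (nat (rk t + 1 - rk p)))
     + (\<Sum>p\<in>R. \<Sum>q\<in>R. if le p q then monom (\<mu> p q) (nat (rk q - rk p)) else 0)"
    unfolding mobius_poly_def mobius_z_def pair_sum[OF finh]
    unfolding hatset using fin
    by (simp add: sum.reindex sum.distrib hm[unfolded hatset] hr hl monom_0 one_pCons add.assoc cong: if_cong)
  have DOT: "mobius_poly (dot_set R t) (hat_le le) (hat_rk rk t) = 1
     + (\<Sum>p\<in>R-{t}. monom (\<mu> p t) (nat (rk t + 1 - rk p)))
     + (\<Sum>p\<in>R-{t}. \<Sum>q\<in>R-{t}. if le p q then monom (\<mu> p q) (nat (rk q - rk p)) else 0)"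
    unfolding mobius_poly_def mobius_z_def pair_sum[OF find]
    unfolding dotset using fin
    by (simp add: sum.reindex sum.distrib dm[unfolded dotset] hr hl monom_0 one_pCons add.assoc cong: if_cong)
  have GP: "g_poly R le rk (rk t) = G"
  proof -
    have e: "{(p,q)\<in>R \<times> R. le p q \<and> rk p \<le> rk t \<and> rk t \<le> rk q} = (\<lambda>p. (p,t)) ` R"
    proof (intro equalityI subsetI)
      fix x assume "x \<in> {(p,q)\<in>R \<times> R. le p q \<and> rk p \<le> rk t \<and> rk t \<le> rk q}"
      then obtain p q where x: "x = (p,q)" "p \<in> R" "q \<in> R" "rk t \<le> rk q" by auto
      have "q = t" using rklt[OF x(2)] rklt[OF x(3)] x(4) by force
      then show "x \<in> (\<lambda>p. (p,t)) ` R" using x by auto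
    next
      fix x assume "x \<in> (\<lambda>p. (p,t)) ` R"
      then show "x \<in> {(p,q)\<in>R \<times> R. le p q \<and> rk p \<le> rk t \<and> rk t \<le> rk q}"
        using t top rkle by auto
    qed
    show ?thesis unfolding g_poly_def e mobius_z_def G_def \<mu>_def
      by (simp add: sum.reindex inj_on_def)
  qed
  have AS: "(\<Sum>p\<in>R. \<Sum>q\<in>R. if le p q then monom (\<mu> p q) (nat (rk q - rk p)) else 0) = G + B"
  proof -
    have "(\<Sum>p\<in>R. \<Sum>q\<in>R. if le p q then monom (\<mu> p q) (nat (rk q - rk p)) else 0)
       = (\<Sum>p\<in>R. monom (\<mu> p t) (nat (rk t - rk p)) + (\<Sum>q\<in>R-{t}. if le p q then monom (\<mu> p q) (nat (rk q - rk p)) else 0))"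
    proof (intro sum.cong refl)
      fix p assume p: "p \<in> R"
      show "(\<Sum>q\<in>R. if le p q then monom (\<mu> p q) (nat (rk q - rk p)) else 0) = monom (\<mu> p t) (nat (rk t - rk p)) + (\<Sum>q\<in>R-{t}. if le p q then monom (\<mu> p q) (nat (rk q - rk p)) else 0)"
        using top p by (simp add: sum.remove[OF fin t, where g="\<lambda>q. if le p q then monom (\<mu> p q) (nat (rk q - rk p)) else 0"])
    qed
    also have "\<dots> = G + (\<Sum>p\<in>R. \<Sum>q\<in>R-{t}. if le p q then monom (\<mu> p q) (nat (rk q - rk p)) else 0)"
      unfolding G_def by (simp add: sum.distrib)
    also have "(\<Sum>p\<in>R. \<Sum>q\<in>R-{t}. if le p q then monom (\<mu> p q) (nat (rk q - rk p)) else 0) = B"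
    proof -
      have z: "(\<Sum>q\<in>R-{t}. if le t q then monom (\<mu> t q) (nat (rk q - rk t)) else 0) = 0"
        using topu by (intro sum.neutral) auto
      show ?thesis unfolding B_def using z
        by (simp add: sum.remove[OF fin t, where g="\<lambda>p. \<Sum>q\<in>R-{t}. if le p q then monom (\<mu> p q) (nat (rk q - rk p)) else 0"])
    qed
    finally show ?thesis .
  qed
  have H2: "(\<Sum>p\<in>R. monom (if p = t then -1 else 0::int) (nat (rk t + 1 - rk p))) = - monom 1 1"
  proof -
    have "(\<Sum>p\<in>R. monom (if p = t then -1 else 0) (nat (rk t + 1 - rk p)))
        = (\<Sum>p\<in>R. if p = t then monom (-1) (nat (rk t + 1 - rk p)) else 0)"
      by (intro sum.cong refl) simp
    also have "\<dots> = monom (-1) 1" using fin t by simp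
    also have "\<dots> = - monom 1 1" by (rule minus_monom[symmetric])
    finally show ?thesis .
  qed
  have D2: "(\<Sum>p\<in>R-{t}. monom (\<mu> p t) (nat (rk t + 1 - rk p))) = monom 1 1 * G'"
    unfolding G'_def sum_distrib_left
  proof (intro sum.cong refl)
    fix p assume p: "p \<in> R - {t}"
    have e: "nat (rk t + 1 - rk p) = Suc (nat (rk t - rk p))" using rkle[of p] p by auto
    show "monom (\<mu> p t) (nat (rk t + 1 - rk p)) = monom 1 1 * monom (\<mu> p t) (nat (rk t - rk p))"
      unfolding e by (rule m3)
  qed
  show ?thesis unfolding HAT DOT AS H2 D2 GP GG m1 B_def[symmetric] by (simp add: algebra_simps)
qed

end
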